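(* There exist constants $\lambda_1,\lambda_2>0$ such that, $\mu$-almost surely, for every dual vertex $x\in(\mathbb Z^2)^*$ there exists $N\in\mathbb N$ such that for all $n>N$ and every connected subgraph $G$ of $x+[n]^2$ with at least $\log n$ vertices, \[\lambda_1|E(G)|\geq |w|(G)\geq\lambda_2|E(G)|.\]
   Context: $\mu$ is the product measure on $\mathbb R^{E(\mathbb Z^2)}$ under which the interactions $(w_e)$ are i.i.d. standard normal; dual edges of $(\mathbb Z^2)^*=(\tfrac12,\tfrac12)+\mathbb Z^2$ carry the interaction of the unique edge of $\mathbb Z^2$ they cross. $[n]=\{0,\dots,n-1\}$ and $[n]^2$ is the induced subgraph of the (dual) lattice on $\{(i,j)+(\tfrac12,\tfrac12):i,j\in[n]\}$, so $x+[n]^2$ is its translate. For a subgraph $G$, $|w|(G)=\sum_{e\in E(G)}|w_e|$. $\log$ is the natural logarithm. *)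

theory Defs
  imports "HOL-Probability.Probability"
begin

type_synonym vtx = "int \<times> int"

text \<open>A dual vertex (i,j)+(1/2,1/2) of (Z^2)^* is
  represented by the integer pair (i,j).\<close>

definition nn :: "vtx \<Rightarrow> vtx \<Rightarrow> bool" where
  "nn u v \<longleftrightarrow> \<bar>fst u - fst v\<bar> + \<bar>snd u - snd v\<bar> = 1"

definition Z2_edges :: "vtx set set" where
  "Z2_edges = {{p, q} | p q. nn p q}"

definition std_gauss :: "real measure" where
  "std_gauss = density lborel std_normal_density"

definition mu :: "(vtx set \<Rightarrow> real) measure" where
  "mu = PiM Z2_edges (\<lambda>_. std_gauss)"

text \<open>Horizontal dual edge (i,j)--(i+1,j) crosses
  {(i+1,j),(i+1,j+1)}; vertical dual edge (i,j)--(i,j+1) crosses {(i,j+1),(i+1,j+1)}.\<close>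
definition cross_aux :: "vtx \<Rightarrow> vtx \<Rightarrow> vtx set" where
  "cross_aux u v =
     (if snd u = snd v
      then (let i = min (fst u) (fst v) in {(i + 1, snd u), (i + 1, snd u + 1)})
      else (let j = min (snd u) (snd v) in {(fst u, j + 1), (fst u + 1, j + 1)}))"

definition dual_cross :: "vtx set \<Rightarrow> vtx set" where
  "dual_cross e = (THE c. \<exists>u v. e = {u, v} \<and> c = cross_aux u v)"

definition box :: "vtx \<Rightarrow> nat \<Rightarrow> vtx set" where
  "box x n = {(fst x + int i, snd x + int j) | i j. i < n \<and> j < n}"

definition subgraph_box :: "vtx \<Rightarrow> nat \<Rightarrow> vtx set \<Rightarrow> vtx set set \<Rightarrow> bool" where
  "subgraph_box x n V F \<longleftrightarrow> V \<subseteq> box x n \<and>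
     (\<forall>e\<in>F. \<exists>u v. e = {u, v} \<and> nn u v \<and> u \<in> V \<and> v \<in> V)"

definition connected_graph :: "vtx set \<Rightarrow> vtx set set \<Rightarrow> bool" where
  "connected_graph V F \<longleftrightarrow> V \<noteq> {} \<and>
     (\<forall>u\<in>V. \<forall>v\<in>V. (\<lambda>a b. {a, b} \<in> F)\<^sup>*\<^sup>* u v)"

definition abs_weight :: "(vtx set \<Rightarrow> real) \<Rightarrow> vtx set set \<Rightarrow> real" where
  "abs_weight w F = (\<Sum>e\<in>F. \<bar>w (dual_cross e)\<bar>)"

end

theory Submission
  imports Defs "HOL-Library.FuncSet"
begin


lemma std_gauss_prob: "prob_space std_gauss"
  unfolding std_gauss_def by (simp add: prob_space_normal_density)

lemma sets_std_gauss[simp]: "sets std_gauss = sets borel"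
  unfolding std_gauss_def by simp

lemma space_std_gauss[simp]: "space std_gauss = UNIV"
  unfolding std_gauss_def by simp

lemma snd_le1: "std_normal_density x \<le> 1"
proof -
  have "exp (- x\<^sup>2 / 2) \<le> 1" by simp
  moreover have "1 / sqrt (2 * pi) \<le> 1" using pi_gt3 by (simp add: divide_le_eq_1 real_le_rsqrt)
  ultimately show ?thesis unfolding std_normal_density_def
    by (metis exp_ge_zero mult_le_one zero_le_divide_1_iff real_sqrt_ge_zero pi_ge_zero mult_nonneg_nonneg zero_le_numeral)
qed

lemma gauss_small: assumes "0 \<le> d" shows "measure std_gauss {x. \<bar>x\<bar> \<le> d} \<le> 2 * d"
proof -
  have S: "{x::real. \<bar>x\<bar> \<le> d} = {-d..d}" by auto
  have "emeasure std_gauss {-d..d} = (\<integral>\<^sup>+x. ennreal (std_normal_density x) * indicator {-d..d} x \<partial>lborel)"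
    unfolding std_gauss_def by (subst emeasure_density) auto
  also have "\<dots> \<le> (\<integral>\<^sup>+x. indicator {-d..d} x \<partial>lborel)"
    by (intro nn_integral_mono) (auto simp: indicator_def snd_le1)
  also have "\<dots> = ennreal (2*d)" using assms by simp
  finally have "emeasure std_gauss {-d..d} \<le> ennreal (2*d)" .
  then show ?thesis unfolding S
    using assms by (simp add: measure_def enn2real_leI)
qed

lemma fact_bound: "fact (2*j) / (2^j * fact j) \<le> (real j) ^ j"
proof -
  have n: "fact (2*j) \<le> (2*j)^j * (fact j::nat)"
  proof -
    have "fact j dvd (fact (2*j)::nat)" by (simp add: fact_dvd)
    then have "fact (2*j) = (fact (2*j) div fact j) * (fact j::nat)" by simp
    also have "\<dots> \<le> (2*j)^j * fact j"
      using fact_div_fact_le_pow[of j "2*j"] by (intro mult_right_mono) auto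
    finally show ?thesis .
  qed
  have "fact (2*j) \<le> (real (2*j))^j * fact j"
    using n by (metis of_nat_fact of_nat_le_iff of_nat_mult of_nat_power)
  then show ?thesis by (simp add: field_simps power_mult_distrib)
qed

lemma gauss_tail: "measure std_gauss {x. 3 * real j \<le> \<bar>x\<bar>} \<le> (1/9)^j"
proof (cases "j = 0")
  case True
  interpret prob_space std_gauss by (rule std_gauss_prob)
  show ?thesis using True by simp
next
  case False
  define t where "t = (3 * real j) ^ (2*j)"
  have tpos: "t > 0" unfolding t_def using False by simp
  define g where "g x = std_normal_density x * x ^ (2*j) / t" for x
  have int: "integrable lborel g" unfolding g_def
    by (intro integrable_divide integrable_std_normal_moment)
  have gi: "integral\<^sup>L lborel g = fact (2*j) / (2^j * fact j) / t"
    unfolding g_def using integral_std_normal_moment_even[of j] by simp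
  have A: "{x::real. 3 * real j \<le> \<bar>x\<bar>} \<in> sets borel" by measurable
  have "emeasure std_gauss {x. 3 * real j \<le> \<bar>x\<bar>} =
      (\<integral>\<^sup>+x. ennreal (std_normal_density x) * indicator {x. 3 * real j \<le> \<bar>x\<bar>} x \<partial>lborel)"
    unfolding std_gauss_def using A by (subst emeasure_density) auto
  also have "\<dots> \<le> (\<integral>\<^sup>+x. ennreal (g x) \<partial>lborel)"
  proof (intro nn_integral_mono)
    fix x :: real
    show "ennreal (std_normal_density x) * indicator {x. 3 * real j \<le> \<bar>x\<bar>} x \<le> ennreal (g x)"
    proof (cases "3 * real j \<le> \<bar>x\<bar>")
      case True
      have "t \<le> \<bar>x\<bar> ^ (2*j)" unfolding t_def using True by (intro power_mono) auto
      also have "\<dots> = x ^ (2*j)" by (simp add: power_even_abs)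
      finally have "1 \<le> x^(2*j) / t" using tpos by simp
      then have "std_normal_density x \<le> g x" unfolding g_def
        using mult_left_mono[of 1 "x^(2*j)/t" "std_normal_density x"] by simp
      then show ?thesis using True by (simp add: indicator_def ennreal_leI)
    next
      case False
      then show ?thesis by (simp add: indicator_def)
    qed
  qed
  also have "\<dots> = ennreal (integral\<^sup>L lborel g)"
  proof (rule nn_integral_eq_integral[OF int], intro AE_I2)
    fix x :: real
    have "0 \<le> x^(2*j)" by (simp add: power_mult)
    then show "0 \<le> g x" unfolding g_def using tpos by simp
  qed
  finally have e: "emeasure std_gauss {x. 3 * real j \<le> \<bar>x\<bar>} \<le> ennreal (fact (2*j) / (2^j * fact j) / t)"
    using gi by simp
  have "fact (2*j) / (2^j * fact j) / t \<le> real j ^ j / t"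
    using fact_bound[of j] tpos by (intro divide_right_mono) auto
  also have "\<dots> = 1 / (9^j * real j ^ j)"
  proof -
    have "t = (9 * (real j * real j))^j" unfolding t_def by (simp add: power_mult power2_eq_square)
    also have "\<dots> = 9^j * (real j^j * real j^j)" by (simp add: power_mult_distrib)
    finally show ?thesis using False by simp
  qed
  also have "\<dots> \<le> (1/9)^j"
  proof -
    have "1 \<le> real j ^ j" using False by (simp add: one_le_power)
    have "1 / (9^j * real j ^ j) \<le> 1 / 9^j"
    proof (rule divide_left_mono)
      have p: "0 < real j ^ j" using False by simp
      show "0 < 9 ^ j * real j ^ j * 9 ^ j" using p by simp
      show "(9::real) ^ j \<le> 9 ^ j * real j ^ j" using \<open>1 \<le> real j ^ j\<close> by simp
    qed simp
    then show ?thesis by (simp add: power_one_over)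
  qed
  finally have "fact (2*j) / (2^j * fact j) / t \<le> (1/9)^j" .
  with e have "emeasure std_gauss {x. 3 * real j \<le> \<bar>x\<bar>} \<le> ennreal ((1/9)^j)"
    by (meson ennreal_leI order.trans)
  then show ?thesis by (simp add: measure_def enn2real_leI)
qed



interpretation PP: product_prob_space "\<lambda>_::vtx set. std_gauss" Z2_edges
  using std_gauss_prob
  by (auto simp: product_prob_space_def product_prob_space_axioms_def product_sigma_finite_def
      prob_space_imp_sigma_finite)

lemma prob_mu: "prob_space mu"
  unfolding mu_def by (rule PP.P.prob_space_axioms)

definition rect :: "vtx set set \<Rightarrow> (vtx set \<Rightarrow> real set) \<Rightarrow> (vtx set \<Rightarrow> real) set" where
  "rect A X = {w \<in> space mu. \<forall>e\<in>A. w e \<in> X e}"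

lemma rect_emb: assumes "A \<subseteq> Z2_edges"
  shows "rect A X = prod_emb Z2_edges (\<lambda>_. std_gauss) A (PiE A X)"
  using assms unfolding rect_def mu_def prod_emb_def space_PiM by (auto simp: PiE_iff extensional_def)

lemma rect_sets: assumes "A \<subseteq> Z2_edges" "finite A" "\<And>e. X e \<in> sets borel"
  shows "rect A X \<in> sets mu"
  unfolding rect_emb[OF assms(1)] mu_def
  using assms by (intro measurable_prod_emb sets_PiM_I_finite) auto

lemma rect_measure: assumes "A \<subseteq> Z2_edges" "finite A" "\<And>e. X e \<in> sets borel"
  shows "measure mu (rect A X) = (\<Prod>e\<in>A. measure std_gauss (X e))"
proof -
  have "emeasure mu (rect A X) = (\<Prod>e\<in>A. emeasure std_gauss (X e))"
    unfolding rect_emb[OF assms(1)] mu_def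
    using assms by (intro PP.emeasure_PiM_emb) auto
  also have "\<dots> = (\<Prod>e\<in>A. ennreal (measure std_gauss (X e)))"
    by (simp add: PP.M.emeasure_eq_measure)
  also have "\<dots> = ennreal (\<Prod>e\<in>A. measure std_gauss (X e))"
    by (simp add: prod_ennreal)
  finally show ?thesis
    by (simp add: measure_def prod_nonneg)
qed

definition dd :: real where "dd = (1/2)^45"

definition LowSet :: "vtx set set \<Rightarrow> (vtx set \<Rightarrow> real) set" where
  "LowSet S = (\<Union>A \<in> {A. A \<subseteq> S \<and> card S \<le> 2 * card A}. rect A (\<lambda>_. {x. \<bar>x\<bar> \<le> dd}))"

lemma LowSet_sets: assumes "S \<subseteq> Z2_edges" "finite S" shows "LowSet S \<in> sets mu"
  unfolding LowSet_def
  using assms by (intro sets.finite_UN rect_sets) (auto intro: finite_subset)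

lemma LowSet_measure: assumes "S \<subseteq> Z2_edges" "finite S"
  shows "measure mu (LowSet S) \<le> ((1/2)^21) ^ card S"
proof -
  let ?F = "{A. A \<subseteq> S \<and> card S \<le> 2 * card A}"
  have fin: "finite ?F" using assms by simp
  have "measure mu (LowSet S) \<le> (\<Sum>A\<in>?F. measure mu (rect A (\<lambda>_. {x. \<bar>x\<bar> \<le> dd})))"
    unfolding LowSet_def using assms
    by (intro measure_UNION_le fin rect_sets) (auto intro: finite_subset)
  also have "\<dots> \<le> (\<Sum>A\<in>?F. ((1/2)^22) ^ card S)"
  proof (intro sum_mono)
    fix A assume A: "A \<in> ?F"
    then have fA: "finite A" using assms(2) finite_subset by blast
    have "measure mu (rect A (\<lambda>_. {x. \<bar>x\<bar> \<le> dd})) = (\<Prod>e\<in>A. measure std_gauss {x. \<bar>x\<bar> \<le> dd})"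
      using A assms fA by (intro rect_measure) auto
    also have "\<dots> \<le> (\<Prod>e\<in>A. 2 * dd)"
      by (intro prod_mono conjI gauss_small) (auto simp: dd_def)
    also have "\<dots> = (((1/2)^22)^2) ^ card A"
    proof -
      have "2 * dd = ((1/2)^22)^2" by (simp add: dd_def power_one_over)
      then show ?thesis by simp
    qed
    also have "\<dots> = ((1/2)^22) ^ (2 * card A)" by (simp add: power_mult)
    also have "\<dots> \<le> ((1/2)^22) ^ card S"
      using A by (intro power_decreasing) (auto intro: power_le_one)
    finally show "measure mu (rect A (\<lambda>_. {x. \<bar>x\<bar> \<le> dd})) \<le> ((1/2)^22) ^ card S" .
  qed
  also have "\<dots> = card ?F * ((1/2)^22) ^ card S" by simp
  also have "\<dots> \<le> 2 ^ card S * ((1/2)^22) ^ card S"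
  proof -
    have "card ?F \<le> card (Pow S)" using assms by (intro card_mono) auto
    then have "real (card ?F) \<le> 2 ^ card S" using assms by (simp add: card_Pow)
    then show ?thesis by (intro mult_right_mono) auto
  qed
  also have "\<dots> = ((1/2)^21) ^ card S"
  proof -
    have "(2::real) ^ card S * ((1/2)^22) ^ card S = (2 * (1/2)^22) ^ card S"
      by (rule power_mult_distrib[symmetric])
    also have "(2::real) * (1/2)^22 = (1/2)^21" by (simp add: power_one_over)
    finally show ?thesis .
  qed
  finally show ?thesis .
qed

lemma LowSet_mem: assumes "w \<in> space mu" "finite S"
    and "(\<Sum>e\<in>S. \<bar>w e\<bar>) < dd / 2 * card S"
  shows "w \<in> LowSet S"
proof -
  define A where "A = {e\<in>S. \<bar>w e\<bar> \<le> dd}"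
  have "dd * card (S - A) = (\<Sum>e\<in>S - A. dd)" by simp
  also have "\<dots> \<le> (\<Sum>e\<in>S - A. \<bar>w e\<bar>)"
    by (intro sum_mono) (auto simp: A_def)
  also have "\<dots> \<le> (\<Sum>e\<in>S. \<bar>w e\<bar>)"
    using assms(2) by (intro sum_mono2) auto
  finally have "dd * card (S - A) < dd / 2 * card S" using assms(3) by simp
  then have "2 * card (S - A) < card S" by (simp add: dd_def field_simps)
  moreover have "card S = card A + card (S - A)"
  proof -
    have sub: "A \<subseteq> S" unfolding A_def by auto
    have fA: "finite A" using assms(2) sub finite_subset by blast
    have "card (S - A) = card S - card A" using card_Diff_subset[OF fA sub] .
    moreover have "card A \<le> card S" using card_mono[OF assms(2) sub] .
    ultimately show ?thesis by simp
  qed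
  ultimately have "card S \<le> 2 * card A" by simp
  moreover have "A \<subseteq> S" unfolding A_def by auto
  moreover have "w \<in> rect A (\<lambda>_. {x. \<bar>x\<bar> \<le> dd})"
    unfolding rect_def A_def using assms(1) by auto
  ultimately show ?thesis unfolding LowSet_def by blast
qed

lemma geom_le2: "(\<Sum>j\<in>{0..K::nat}. ((4::real)/9)^j) \<le> 2"
proof -
  have n: "norm ((4::real)/9) < 1" by simp
  have "(\<Sum>j\<in>{0..K}. ((4::real)/9)^j) \<le> suminf (\<lambda>j. ((4::real)/9)^j)"
    by (rule sum_le_suminf) (auto intro: summable_geometric[OF n])
  also have "\<dots> = 9/5" using suminf_geometric[OF n] by simp
  finally show ?thesis by simp
qed

definition HighSet :: "vtx set set \<Rightarrow> (vtx set \<Rightarrow> real) set" where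
  "HighSet S = (\<Union>m \<in> {m \<in> PiE S (\<lambda>_. {0..12 * card S}). 12 * card S \<le> (\<Sum>e\<in>S. m e)}.
      rect S (\<lambda>e. {x. 3 * real (m e) \<le> \<bar>x\<bar>}))"

lemma HighSet_sets: assumes "S \<subseteq> Z2_edges" "finite S" shows "HighSet S \<in> sets mu"
  unfolding HighSet_def
  using assms by (intro sets.finite_UN rect_sets) (auto intro!: finite_PiE)

lemma HighSet_measure: assumes "S \<subseteq> Z2_edges" "finite S"
  shows "measure mu (HighSet S) \<le> ((1/2)^21) ^ card S"
proof -
  define K where "K = 12 * card S"
  let ?P = "PiE S (\<lambda>_. {0..K})"
  let ?F = "{m \<in> ?P. K \<le> (\<Sum>e\<in>S. m e)}"
  have finP: "finite ?P" using assms by (intro finite_PiE) auto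
  have fin: "finite ?F" using finP by simp
  define g where "g m = (1/4^K) * (\<Prod>e\<in>S. ((4::real)/9)^(m e))" for m :: "vtx set \<Rightarrow> nat"
  have "measure mu (HighSet S) \<le> (\<Sum>m\<in>?F. measure mu (rect S (\<lambda>e. {x. 3 * real (m e) \<le> \<bar>x\<bar>})))"
    unfolding HighSet_def K_def[symmetric] using assms
    by (intro measure_UNION_le fin rect_sets) auto
  also have "\<dots> \<le> (\<Sum>m\<in>?F. g m)"
  proof (intro sum_mono)
    fix m assume m: "m \<in> ?F"
    have "measure mu (rect S (\<lambda>e. {x. 3 * real (m e) \<le> \<bar>x\<bar>})) =
        (\<Prod>e\<in>S. measure std_gauss {x. 3 * real (m e) \<le> \<bar>x\<bar>})"
      using assms by (intro rect_measure) auto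
    also have "\<dots> \<le> (\<Prod>e\<in>S. (1/9)^(m e))"
      by (intro prod_mono conjI gauss_tail) auto
    also have "\<dots> \<le> g m"
    proof -
      have "(\<Prod>e\<in>S. ((4::real)/9)^(m e)) = (\<Prod>e\<in>S. 4^(m e) * (1/9)^(m e))"
        by (intro prod.cong) (auto simp: power_mult_distrib[symmetric])
      also have "\<dots> = 4^(\<Sum>e\<in>S. m e) * (\<Prod>e\<in>S. (1/9)^(m e))"
        by (simp add: prod.distrib power_sum)
      finally have eq: "g m = 4^(\<Sum>e\<in>S. m e) / 4^K * (\<Prod>e\<in>S. ((1::real)/9)^(m e))"
        unfolding g_def by simp
      have "(4::real)^K \<le> 4^(\<Sum>e\<in>S. m e)" using m by (intro power_increasing) auto
      then have "1 \<le> (4::real)^(\<Sum>e\<in>S. m e) / 4^K" by simp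
      moreover have "0 \<le> (\<Prod>e\<in>S. ((1::real)/9)^(m e))" by (intro prod_nonneg) auto
      ultimately show ?thesis unfolding eq
        using mult_right_mono[of 1 "(4::real)^(\<Sum>e\<in>S. m e) / 4^K"] by simp
    qed
    finally show "measure mu (rect S (\<lambda>e. {x. 3 * real (m e) \<le> \<bar>x\<bar>})) \<le> g m" .
  qed
  also have "\<dots> \<le> (\<Sum>m\<in>?P. g m)"
    using finP by (intro sum_mono2) (auto simp: g_def intro!: prod_nonneg divide_nonneg_nonneg)
  also have "\<dots> = (1/4^K) * (\<Prod>e\<in>S. \<Sum>j\<in>{0..K}. ((4::real)/9)^j)"
    unfolding g_def sum_distrib_left[symmetric]
    by (subst prod_sum_PiE) (use assms in auto)
  also have "\<dots> \<le> (1/4^K) * (\<Prod>e\<in>S. 2)"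
    by (intro mult_left_mono prod_mono conjI geom_le2 sum_nonneg) auto
  also have "\<dots> = (2 / 4^12) ^ card S"
  proof -
    have "(4::real)^K = (4^12)^card S" unfolding K_def by (simp add: power_mult)
    then have "(1/4^K) * (\<Prod>e\<in>S. (2::real)) = 2^card S / (4^12)^card S" by simp
    also have "\<dots> = (2 / 4^12) ^ card S" by (simp only: power_divide)
    finally show ?thesis .
  qed
  also have "\<dots> \<le> ((1/2)^21) ^ card S"
    by (intro power_mono) (auto simp: power_one_over)
  finally show ?thesis .
qed

lemma HighSet_mem: assumes "w \<in> space mu" "finite S"
    and "(\<Sum>e\<in>S. \<bar>w e\<bar>) > 39 * card S"
  shows "w \<in> HighSet S"
proof -
  define K where "K = 12 * card S"
  define k where "k e = nat \<lfloor>\<bar>w e\<bar> / 3\<rfloor>" for e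
  have k1: "3 * real (k e) \<le> \<bar>w e\<bar>" for e
  proof -
    have "real (k e) = of_int \<lfloor>\<bar>w e\<bar> / 3\<rfloor>" unfolding k_def by simp
    then show ?thesis by linarith
  qed
  have k2: "\<bar>w e\<bar> < 3 * real (k e) + 3" for e
  proof -
    have "real (k e) = of_int \<lfloor>\<bar>w e\<bar> / 3\<rfloor>" unfolding k_def by simp
    then show ?thesis by linarith
  qed
  have "39 * real (card S) < (\<Sum>e\<in>S. \<bar>w e\<bar>)" using assms(3) by simp
  also have "\<dots> \<le> (\<Sum>e\<in>S. 3 * real (k e) + 3)"
    by (intro sum_mono) (simp add: k2 less_imp_le)
  also have "\<dots> = 3 * real (\<Sum>e\<in>S. k e) + 3 * card S"
    by (simp add: sum.distrib sum_distrib_left)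
  finally have sk: "K < (\<Sum>e\<in>S. k e)" unfolding K_def by linarith
  define m where "m = restrict (\<lambda>e. min (k e) K) S"
  have mP: "m \<in> PiE S (\<lambda>_. {0..K})" unfolding m_def by auto
  have mS: "K \<le> (\<Sum>e\<in>S. m e)"
  proof (cases "\<exists>e\<in>S. K \<le> k e")
    case True
    then obtain e where e: "e \<in> S" "K \<le> k e" by blast
    have "K = m e" using e unfolding m_def by simp
    also have "\<dots> \<le> (\<Sum>e\<in>S. m e)" using e assms(2) by (intro member_le_sum) auto
    finally show ?thesis .
  next
    case False
    then have "(\<Sum>e\<in>S. m e) = (\<Sum>e\<in>S. k e)" unfolding m_def
      by (intro sum.cong) auto
    then show ?thesis using sk by simp
  qed
  have "w \<in> rect S (\<lambda>e. {x. 3 * real (m e) \<le> \<bar>x\<bar>})"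
    unfolding rect_def using assms(1)
  proof (auto)
    fix e assume "e \<in> S"
    have "real (m e) \<le> real (k e)" using \<open>e \<in> S\<close> unfolding m_def by simp
    then show "3 * real (m e) \<le> \<bar>w e\<bar>" using k1[of e] by linarith
  qed
  then show ?thesis unfolding HighSet_def K_def[symmetric] using mP mS by blast
qed



fun valid :: "vtx list \<Rightarrow> bool" where
  "valid (a # b # r) = (nn a b \<and> valid (b # r))"
| "valid _ = True"

fun wedges :: "vtx list \<Rightarrow> vtx set set" where
  "wedges (a # b # r) = insert {a, b} (wedges (b # r))"
| "wedges _ = {}"

lemma nn_sym: "nn u v \<Longrightarrow> nn v u"
  unfolding nn_def by linarith

lemma valid_append: "valid (xs @ a # ys) \<longleftrightarrow> valid (xs @ [a]) \<and> valid (a # ys)"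
  by (induction xs rule: valid.induct) auto

lemma wedges_append: "wedges (xs @ a # ys) = wedges (xs @ [a]) \<union> wedges (a # ys)"
  by (induction xs rule: wedges.induct) auto

lemma wedges_sub: "e \<in> wedges ps \<Longrightarrow> e \<subseteq> set ps"
  by (induction ps rule: wedges.induct) auto

lemma wedges_finite: "finite (wedges ps)"
  by (induction ps rule: wedges.induct) auto

lemma wedges_nn: "valid ps \<Longrightarrow> e \<in> wedges ps \<Longrightarrow> \<exists>u v. e = {u, v} \<and> nn u v"
  by (induction ps rule: wedges.induct) auto

lemma box_img: "box x n = (\<lambda>ij. (fst x + int (fst ij), snd x + int (snd ij))) ` ({..<n} \<times> {..<n})"
  unfolding box_def by force

lemma box_finite: "finite (box x n)"
  unfolding box_img by simp

lemma box_card: "card (box x n) \<le> n * n"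
proof -
  have "card (box x n) \<le> card ({..<n} \<times> {..<n})" unfolding box_img by (rule card_image_le) simp
  then show ?thesis by (simp add: card_cartesian_product)
qed

lemma sub_F_finite: assumes "subgraph_box x n V F" shows "F \<subseteq> Pow (box x n)"
proof
  fix e assume "e \<in> F"
  then obtain u v where "e = {u, v}" "u \<in> V" "v \<in> V" using assms unfolding subgraph_box_def by blast
  then show "e \<in> Pow (box x n)" using assms unfolding subgraph_box_def by auto
qed

lemma extend_edge:
  assumes sg: "subgraph_box x n V F" and con: "connected_graph V F"
    and E: "wedges ps \<subseteq> F" and sp: "set ps \<subseteq> V" and v: "v \<in> set ps"
    and ne: "wedges ps \<noteq> F"
  shows "\<exists>p q. {p, q} \<in> F - wedges ps \<and> p \<in> set ps \<and> nn p q \<and> q \<in> V"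
proof -
  let ?W = "\<exists>p q. {p, q} \<in> F - wedges ps \<and> p \<in> set ps \<and> nn p q \<and> q \<in> V"
  obtain e0 where e0: "e0 \<in> F" "e0 \<notin> wedges ps" using E ne by blast
  obtain a b where ab: "e0 = {a, b}" "nn a b" "a \<in> V" "b \<in> V"
    using sg e0 unfolding subgraph_box_def by blast
  have vV: "v \<in> V" using v sp by auto
  have "(\<lambda>a b. {a, b} \<in> F)\<^sup>*\<^sup>* v a" using con vV ab unfolding connected_graph_def by blast
  then have "a \<in> set ps \<or> ?W"
  proof (induction rule: rtranclp_induct)
    case base then show ?case using v by simp
  next
    case (step y z)
    show ?case
    proof (cases "y \<in> set ps")
      case True
      obtain u u' where uu: "{y, z} = {u, u'}" "nn u u'" "u \<in> V" "u' \<in> V"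
        using sg step(2) unfolding subgraph_box_def by blast
      have nyz: "nn y z \<and> z \<in> V"
      proof -
        from uu(1) have "(y = u \<and> z = u') \<or> (y = u' \<and> z = u)" by (auto simp: doubleton_eq_iff)
        then show ?thesis using uu(2-4) nn_sym[of u u'] by blast
      qed
      show ?thesis
      proof (cases "{y, z} \<in> wedges ps")
        case True
        then have "z \<in> set ps" using wedges_sub by blast
        then show ?thesis by simp
      next
        case False
        then show ?thesis using step(2) \<open>y \<in> set ps\<close> nyz by blast
      qed
    next
      case False
      then show ?thesis using step(3) by blast
    qed
  qed
  then show ?thesis using e0 ab by blast
qed

 

lemma F_finite: assumes "subgraph_box x n V F" shows "finite F"
  using sub_F_finite[OF assms] box_finite by (meson finite_Pow_iff finite_subset)

lemma walk_grow:
  assumes sg: "subgraph_box x n V F" and con: "connected_graph V F"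
  shows "valid ps \<Longrightarrow> set ps \<subseteq> V \<Longrightarrow> v \<in> set ps \<Longrightarrow> wedges ps \<subseteq> F \<Longrightarrow>
    length ps = 2 * card (wedges ps) + 1 \<Longrightarrow> card F - card (wedges ps) = k \<Longrightarrow>
    \<exists>ps'. valid ps' \<and> set ps' \<subseteq> V \<and> v \<in> set ps' \<and> wedges ps' = F \<and> length ps' = 2 * card F + 1"
proof (induction k arbitrary: ps)
  case 0
  have fF: "finite F" using F_finite[OF sg] .
  have "card F \<le> card (wedges ps)" using 0 by simp
  then have "wedges ps = F" using 0(4) fF by (intro card_seteq) auto
  then show ?case using 0(1,2,3,5) by (intro exI[of _ ps]) simp
next
  case (Suc k)
  have fF: "finite F" using F_finite[OF sg] .
  have ne: "wedges ps \<noteq> F" using Suc.prems(6) by auto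
  obtain p q where pq: "{p, q} \<in> F - wedges ps" "p \<in> set ps" "nn p q" "q \<in> V"
    using extend_edge[OF sg con Suc.prems(4) Suc.prems(2) Suc.prems(3) ne] by blast
  obtain xs ys where ps: "ps = xs @ p # ys" using pq(2) by (meson split_list)
  define ps2 where "ps2 = xs @ p # q # p # ys"
  have v1: "valid (xs @ [p])" "valid (p # ys)" using Suc.prems(1) unfolding ps valid_append[of xs p ys] by auto
  have a1: "valid ps2" unfolding ps2_def valid_append[of xs p "q # p # ys"] using v1 pq(3) nn_sym[OF pq(3)] by simp
  have w2: "wedges ps2 = insert {p, q} (wedges ps)"
  proof -
    have "{q, p} = {p, q}" by auto
    then have "wedges (p # q # p # ys) = insert {p, q} (wedges (p # ys))" by simp
    then show ?thesis unfolding ps2_def ps wedges_append[of xs p ys] wedges_append[of xs p "q # p # ys"] by auto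
  qed
  have c2: "card (wedges ps2) = Suc (card (wedges ps))"
    unfolding w2 using pq(1) wedges_finite by simp
  have a2: "set ps2 \<subseteq> V" using Suc.prems(2) pq(4) unfolding ps2_def ps by auto
  have a3: "v \<in> set ps2" using Suc.prems(3) unfolding ps2_def ps by auto
  have a4: "wedges ps2 \<subseteq> F" using w2 pq(1) Suc.prems(4) by auto
  have a5: "length ps2 = 2 * card (wedges ps2) + 1"
    using c2 Suc.prems(5) unfolding ps2_def ps by simp
  have a6: "card F - card (wedges ps2) = k" using c2 Suc.prems(6) by simp
  show ?case by (rule Suc.IH[OF a1 a2 a3 a4 a5 a6])
qed


lemma walk_exists:
  assumes sg: "subgraph_box x n V F" and con: "connected_graph V F"
  shows "\<exists>ps. valid ps \<and> set ps \<subseteq> V \<and> V \<subseteq> set ps \<and> wedges ps = F \<and> length ps = 2 * card F + 1"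
proof -
  obtain v where v: "v \<in> V" using con unfolding connected_graph_def by blast
  obtain ps where ps: "valid ps" "set ps \<subseteq> V" "v \<in> set ps" "wedges ps = F" "length ps = 2 * card F + 1"
  proof -
    have "valid [v]" "set [v] \<subseteq> V" "v \<in> set [v]" "wedges [v] \<subseteq> F"
      "length [v] = 2 * card (wedges [v]) + 1" "card F - card (wedges [v]) = card F" using v by auto
    from walk_grow[OF sg con this] show ?thesis using that by blast
  qed
  have "V \<subseteq> set ps"
  proof
    fix u assume u: "u \<in> V"
    show "u \<in> set ps"
    proof (cases "u = v")
      case True then show ?thesis using ps by simp
    next
      case False
      have "(\<lambda>a b. {a, b} \<in> F)\<^sup>*\<^sup>* u v" using con u v unfolding connected_graph_def by blast
      then obtain z where "{u, z} \<in> F"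
      proof (cases rule: converse_rtranclpE)
        case base then show ?thesis using False by simp
      next
        case (step y) then show ?thesis using that by blast
      qed
      then show ?thesis using ps(4) wedges_sub by blast
    qed
  qed
  then show ?thesis using ps by blast
qed

lemma cross_sym: assumes "nn u v" shows "cross_aux v u = cross_aux u v"
proof (cases "snd u = snd v")
  case True then show ?thesis unfolding cross_aux_def Let_def by (simp add: min.commute)
next
  case False
  then have "fst u = fst v" using assms unfolding nn_def by linarith
  then show ?thesis using False unfolding cross_aux_def Let_def by (simp add: min.commute)
qed

lemma dc_eq: assumes "nn u v" shows "dual_cross {u, v} = cross_aux u v"
  unfolding dual_cross_def
proof (rule the_equality)
  show "\<exists>u' v'. {u, v} = {u', v'} \<and> cross_aux u v = cross_aux u' v'" by blast
next
  fix c assume "\<exists>u' v'. {u, v} = {u', v'} \<and> c = cross_aux u' v'"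
  then obtain u' v' where "{u, v} = {u', v'}" "c = cross_aux u' v'" by blast
  then have "(u' = u \<and> v' = v) \<or> (u' = v \<and> v' = u)" "c = cross_aux u' v'"
    by (auto simp: doubleton_eq_iff)
  then show "c = cross_aux u v" using cross_sym[OF assms] by auto
qed

lemma cross_in: assumes "nn u v" shows "cross_aux u v \<in> Z2_edges"
proof (cases "snd u = snd v")
  case True
  let ?i = "min (fst u) (fst v)"
  have "cross_aux u v = {(?i + 1, snd u), (?i + 1, snd u + 1)}"
    using True unfolding cross_aux_def Let_def by simp
  moreover have "nn (?i + 1, snd u) (?i + 1, snd u + 1)" unfolding nn_def by simp
  ultimately show ?thesis unfolding Z2_edges_def by blast
next
  case False
  let ?j = "min (snd u) (snd v)"
  have "cross_aux u v = {(fst u, ?j + 1), (fst u + 1, ?j + 1)}"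
    using False unfolding cross_aux_def Let_def by simp
  moreover have "nn (fst u, ?j + 1) (fst u + 1, ?j + 1)" unfolding nn_def by simp
  ultimately show ?thesis unfolding Z2_edges_def by blast
qed

lemma cross_inj:
  assumes "nn u v" "nn u' v'" "cross_aux u v = cross_aux u' v'"
  shows "{u, v} = {u', v'}"
proof -
  obtain a b c d a' b' c' d' where uv: "u = (a, b)" "v = (c, d)" "u' = (a', b')" "v' = (c', d')"
    by (metis surj_pair)
  show ?thesis using assms unfolding uv nn_def cross_aux_def Let_def
    by (auto simp: doubleton_eq_iff min_def split: if_splits)
qed

definition nbrs :: "vtx \<Rightarrow> vtx set" where
  "nbrs p = set [(fst p + 1, snd p), (fst p - 1, snd p), (fst p, snd p + 1), (fst p, snd p - 1)]"

lemma nbrs_card: "card (nbrs p) \<le> 4"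
proof -
  have "card (nbrs p) \<le> length [(fst p + 1, snd p), (fst p - 1, snd p), (fst p, snd p + 1), (fst p, snd p - 1)]"
    unfolding nbrs_def by (rule card_length)
  then show ?thesis by simp
qed

lemma nn_nbrs: assumes "nn p q" shows "q \<in> nbrs p"
proof -
  obtain a b c d where pq: "p = (a, b)" "q = (c, d)" by (metis surj_pair)
  have "\<bar>a - c\<bar> + \<bar>b - d\<bar> = 1" using assms unfolding pq nn_def by simp
  then have "(c = a + 1 \<and> d = b) \<or> (c = a - 1 \<and> d = b) \<or> (c = a \<and> d = b + 1) \<or> (c = a \<and> d = b - 1)"
    by arith
  then show ?thesis unfolding pq nbrs_def by auto
qed

definition walks_from :: "vtx \<Rightarrow> nat \<Rightarrow> vtx list set" where
  "walks_from p L = {ps. length ps = Suc L \<and> valid ps \<and> hd ps = p}"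

lemma walks_from_Suc: "walks_from p (Suc L) \<subseteq> (\<Union>q\<in>nbrs p. (Cons p) ` walks_from q L)"
proof
  fix ps assume ps: "ps \<in> walks_from p (Suc L)"
  have l: "length ps = Suc (Suc L)" and h: "hd ps = p" using ps unfolding walks_from_def by auto
  obtain y ys where y: "ps = y # ys" using l by (cases ps) auto
  obtain q r where qr: "ys = q # r" using l y by (cases ys) auto
  have ps2: "ps = p # q # r" using y qr h by simp
  have "nn p q" "valid (q # r)" "length (q # r) = Suc L" using ps unfolding ps2 walks_from_def by auto
  then have "q # r \<in> walks_from q L" unfolding walks_from_def by simp
  then have "ps \<in> (Cons p) ` walks_from q L" unfolding ps2 by blast
  then show "ps \<in> (\<Union>q\<in>nbrs p. (Cons p) ` walks_from q L)" using nn_nbrs[OF \<open>nn p q\<close>] by blast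
qed

lemma walks_from_bound: "finite (walks_from p L) \<and> card (walks_from p L) \<le> 4 ^ L"
proof (induction L arbitrary: p)
  case 0
  have "walks_from p 0 = {[p]}"
  proof (intro set_eqI iffI)
    fix ps assume "ps \<in> walks_from p 0"
    then have "length ps = 1" "hd ps = p" unfolding walks_from_def by auto
    then show "ps \<in> {[p]}" by (cases ps) auto
  qed (simp add: walks_from_def)
  then show ?case by simp
next
  case (Suc L)
  let ?U = "\<Union>q\<in>nbrs p. (Cons p) ` walks_from q L"
  have fn: "finite (nbrs p)" unfolding nbrs_def by simp
  have fU: "finite ?U" by (intro finite_UN_I fn finite_imageI) (simp add: Suc.IH)
  have "card ?U \<le> (\<Sum>q\<in>nbrs p. card ((Cons p) ` walks_from q L))"
    by (rule card_UN_le[OF fn])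
  also have "\<dots> \<le> (\<Sum>q\<in>nbrs p. 4 ^ L)"
    by (intro sum_mono) (meson Suc.IH card_image_le le_trans)
  also have "\<dots> = card (nbrs p) * 4 ^ L" by simp
  also have "\<dots> \<le> 4 * 4 ^ L" using nbrs_card by (intro mult_right_mono) auto
  finally have "card ?U \<le> 4 ^ Suc L" by simp
  then show ?case using walks_from_Suc[of p L] fU
    by (meson card_mono finite_subset le_trans)
qed


definition walks :: "vtx \<Rightarrow> nat \<Rightarrow> nat \<Rightarrow> vtx list set" where
  "walks x n L = (\<Union>p\<in>box x n. walks_from p L)"

lemma walks_finite: "finite (walks x n L)"
  unfolding walks_def using box_finite walks_from_bound by blast

lemma walks_card: "card (walks x n L) \<le> n * n * 4 ^ L"
proof -
  have "card (walks x n L) \<le> (\<Sum>p\<in>box x n. card (walks_from p L))"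
    unfolding walks_def by (rule card_UN_le[OF box_finite])
  also have "\<dots> \<le> (\<Sum>p\<in>box x n. 4 ^ L)"
    by (intro sum_mono) (use walks_from_bound in blast)
  also have "\<dots> = card (box x n) * 4 ^ L" by simp
  also have "\<dots> \<le> n * n * 4 ^ L" using box_card by (intro mult_right_mono) auto
  finally show ?thesis .
qed

lemma walk_in_walks: assumes "valid ps" "ps \<noteq> []" "hd ps \<in> box x n"
  shows "ps \<in> walks x n (length ps - 1)"
  using assms unfolding walks_def walks_from_def by auto

lemma dc_inj: assumes "valid ps" shows "inj_on dual_cross (wedges ps)"
proof
  fix e e' assume e: "e \<in> wedges ps" "e' \<in> wedges ps" "dual_cross e = dual_cross e'"
  obtain u v where uv: "e = {u, v}" "nn u v" using wedges_nn[OF assms e(1)] by blast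
  obtain u' v' where uv': "e' = {u', v'}" "nn u' v'" using wedges_nn[OF assms e(2)] by blast
  show "e = e'" using e(3) unfolding uv uv' dc_eq[OF uv(2)] dc_eq[OF uv'(2)]
    using cross_inj[OF uv(2) uv'(2)] by simp
qed

lemma dc_sub: assumes "valid ps" shows "dual_cross ` wedges ps \<subseteq> Z2_edges"
proof
  fix c assume "c \<in> dual_cross ` wedges ps"
  then obtain e where e: "e \<in> wedges ps" "c = dual_cross e" by blast
  obtain u v where uv: "e = {u, v}" "nn u v" using wedges_nn[OF assms e(1)] by blast
  show "c \<in> Z2_edges" using e(2) unfolding uv dc_eq[OF uv(2)] using cross_in[OF uv(2)] by simp
qed

lemma abs_weight_dc: assumes "valid ps"
  shows "abs_weight w (wedges ps) = (\<Sum>c\<in>dual_cross ` wedges ps. \<bar>w c\<bar>)"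
    and "card (dual_cross ` wedges ps) = card (wedges ps)"
  unfolding abs_weight_def using sum.reindex[OF dc_inj[OF assms], of "\<lambda>c. \<bar>w c\<bar>"]
    card_image[OF dc_inj[OF assms]] by auto



definition BadW :: "vtx list \<Rightarrow> (vtx set \<Rightarrow> real) set" where
  "BadW ps = LowSet (dual_cross ` wedges ps) \<union> HighSet (dual_cross ` wedges ps)"

definition Mset :: "nat \<Rightarrow> nat set" where
  "Mset n = {m. m \<le> 2^(n*n) \<and> ln (real n) \<le> 2 * real m + 1}"

definition Bad :: "vtx \<Rightarrow> nat \<Rightarrow> (vtx set \<Rightarrow> real) set" where
  "Bad x n = (\<Union>m\<in>Mset n. \<Union>ps\<in>{ps \<in> walks x n (2*m). card (wedges ps) = m}. BadW ps)"

lemma walks_valid: "ps \<in> walks x n L \<Longrightarrow> valid ps"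
  unfolding walks_def walks_from_def by auto

lemma BadW_sets: "valid ps \<Longrightarrow> BadW ps \<in> sets mu"
  unfolding BadW_def using dc_sub wedges_finite
  by (intro sets.Un LowSet_sets HighSet_sets) auto

lemma BadW_measure: assumes "valid ps"
  shows "measure mu (BadW ps) \<le> 2 * ((1/2)^21) ^ card (wedges ps)"
proof -
  let ?S = "dual_cross ` wedges ps"
  have S: "?S \<subseteq> Z2_edges" "finite ?S" using dc_sub[OF assms] wedges_finite by auto
  have c: "card ?S = card (wedges ps)" using abs_weight_dc(2)[OF assms] .
  have "measure mu (BadW ps) \<le> measure mu (LowSet ?S) + measure mu (HighSet ?S)"
    unfolding BadW_def using S by (intro measure_Un_le LowSet_sets HighSet_sets)
  also have "\<dots> \<le> ((1/2)^21) ^ card ?S + ((1/2)^21) ^ card ?S"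
    using S by (intro add_mono LowSet_measure HighSet_measure)
  finally show ?thesis using c by simp
qed

lemma Mset_finite: "finite (Mset n)"
  unfolding Mset_def by (rule finite_subset[of _ "{..2^(n*n)}"]) auto

lemma Bad_sets: "Bad x n \<in> sets mu"
  unfolding Bad_def
  using Mset_finite walks_finite walks_valid BadW_sets
  by (intro sets.finite_UN) auto

lemma q_bound: "((1::real)/2)^17 \<le> exp (-10) / 2"
proof -
  have "exp (10::real) = exp 1 ^ 10" by (simp add: exp_of_nat_mult[symmetric])
  also have "\<dots> \<le> 3 ^ 10" using exp_le by (intro power_mono) auto
  also have "\<dots> \<le> (2::real)^16" by simp
  finally have "exp (10::real) \<le> 2^16" .
  then have "1 / 2^16 \<le> 1 / exp (10::real)" by (intro divide_left_mono) auto
  then show ?thesis by (simp add: exp_minus power_one_over field_simps)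
qed

lemma geom_half: "finite A \<Longrightarrow> (\<Sum>m\<in>A. ((1::real)/2)^m) \<le> 2"
proof -
  assume fA: "finite A"
  have n: "norm ((1::real)/2) < 1" by simp
  have "(\<Sum>m\<in>A. ((1::real)/2)^m) \<le> suminf (\<lambda>m. ((1::real)/2)^m)"
    by (rule sum_le_suminf) (auto intro: summable_geometric[OF n] fA)
  also have "\<dots> = 2" using suminf_geometric[OF n] by simp
  finally show ?thesis .
qed

lemma Bad_measure: assumes "n \<ge> 1"
  shows "measure mu (Bad x n) \<le> 4 * exp 5 / real n ^ 3"
proof -
  let ?W = "\<lambda>m. {ps \<in> walks x n (2*m). card (wedges ps) = m}"
  have np: "real n > 0" using assms by simp
  have "measure mu (Bad x n) \<le> (\<Sum>m\<in>Mset n. measure mu (\<Union>ps\<in>?W m. BadW ps))"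
    unfolding Bad_def using Mset_finite walks_finite walks_valid BadW_sets
    by (intro measure_UNION_le sets.finite_UN) auto
  also have "\<dots> \<le> (\<Sum>m\<in>Mset n. \<Sum>ps\<in>?W m. measure mu (BadW ps))"
    using walks_finite walks_valid BadW_sets
    by (intro sum_mono measure_UNION_le) auto
  also have "\<dots> \<le> (\<Sum>m\<in>Mset n. \<Sum>ps\<in>walks x n (2*m). 2 * ((1/2)^21) ^ m)"
  proof (intro sum_mono)
    fix m
    have "(\<Sum>ps\<in>?W m. measure mu (BadW ps)) \<le> (\<Sum>ps\<in>?W m. 2 * ((1/2)^21) ^ m)"
      by (intro sum_mono) (use BadW_measure walks_valid in fastforce)
    also have "\<dots> \<le> (\<Sum>ps\<in>walks x n (2*m). 2 * ((1/2)^21) ^ m)"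
      using walks_finite by (intro sum_mono2) auto
    finally show "(\<Sum>ps\<in>?W m. measure mu (BadW ps)) \<le> (\<Sum>ps\<in>walks x n (2*m). 2 * ((1/2)^21) ^ m)" .
  qed
  also have "\<dots> \<le> (\<Sum>m\<in>Mset n. 2 * real n ^ 2 * (exp 5 / real n ^ 5) * ((1::real)/2)^m)"
  proof (intro sum_mono)
    fix m assume m: "m \<in> Mset n"
    have "(\<Sum>ps\<in>walks x n (2*m). 2 * (((1::real)/2)^21) ^ m) = card (walks x n (2*m)) * (2 * ((1/2)^21) ^ m)"
      by simp
    also have "\<dots> \<le> (real n ^ 2 * 16 ^ m) * (2 * ((1/2)^21) ^ m)"
    proof (intro mult_right_mono)
      have "card (walks x n (2*m)) \<le> n * n * 4 ^ (2*m)" by (rule walks_card)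
      then have "real (card (walks x n (2*m))) \<le> real (n * n * 4 ^ (2*m))" by linarith
      also have "\<dots> = real n ^ 2 * 16 ^ m" by (simp add: power_mult power2_eq_square)
      finally show "real (card (walks x n (2*m))) \<le> real n ^ 2 * 16 ^ m" .
    qed simp
    also have "\<dots> = 2 * real n ^ 2 * ((1/2)^17) ^ m"
    proof -
      have "(16::real) ^ m * ((1/2)^21) ^ m = (16 * (1/2)^21) ^ m"
        by (rule power_mult_distrib[symmetric])
      also have "(16::real) * (1/2)^21 = (1/2)^17" by (simp add: power_one_over)
      finally have "(16::real) ^ m * ((1/2)^21) ^ m = ((1/2)^17) ^ m" .
      then show ?thesis by (simp add: algebra_simps)
    qed
    also have "\<dots> \<le> 2 * real n ^ 2 * (exp (-10 * real m) * ((1::real)/2)^m)"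
    proof (intro mult_left_mono)
      have "(((1::real)/2)^17) ^ m \<le> (exp (-10) / 2) ^ m"
        using q_bound by (intro power_mono) auto
      also have "\<dots> = exp (-10 * real m) * (1/2)^m"
        by (simp add: power_divide exp_of_nat_mult[symmetric] power_one_over mult.commute)
      finally show "(((1::real)/2)^17) ^ m \<le> exp (-10 * real m) * (1/2)^m" .
    qed simp
    also have "\<dots> \<le> 2 * real n ^ 2 * ((exp 5 / real n ^ 5) * ((1::real)/2)^m)"
    proof (intro mult_left_mono mult_right_mono)
      have l: "ln (real n) \<le> 2 * real m + 1" using m unfolding Mset_def by simp
      have "exp (-10 * real m) \<le> exp (5 - 5 * ln (real n))" using l by simp
      also have "\<dots> = exp 5 / exp (ln (real n)) ^ 5"
        by (simp add: exp_diff exp_of_nat_mult[symmetric])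
      also have "\<dots> = exp 5 / real n ^ 5" using np by simp
      finally show "exp (-10 * real m) \<le> exp 5 / real n ^ 5" .
    qed auto
    finally show "(\<Sum>ps\<in>walks x n (2*m). 2 * (((1::real)/2)^21) ^ m) \<le> 2 * real n ^ 2 * (exp 5 / real n ^ 5) * ((1::real)/2)^m"
      by (simp add: mult.assoc)
  qed
  also have "\<dots> = 2 * real n ^ 2 * (exp 5 / real n ^ 5) * (\<Sum>m\<in>Mset n. ((1::real)/2)^m)"
    by (simp add: sum_distrib_left)
  also have "\<dots> \<le> 2 * real n ^ 2 * (exp 5 / real n ^ 5) * 2"
    using geom_half[OF Mset_finite] np by (intro mult_left_mono) auto
  also have "\<dots> = 4 * exp 5 / real n ^ 3"
    using np by (simp add: field_simps power_eq_if)
  finally show ?thesis .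
qed

lemma det:
  assumes w: "w \<in> space mu" "w \<notin> Bad x n"
    and sg: "subgraph_box x n V F" and con: "connected_graph V F"
    and lnV: "real (card V) \<ge> ln (real n)"
  shows "39 * real (card F) \<ge> abs_weight w F \<and> abs_weight w F \<ge> dd / 2 * real (card F)"
proof (cases "F = {}")
  case True then show ?thesis by (simp add: abs_weight_def)
next
  case False
  obtain ps where ps: "valid ps" "set ps \<subseteq> V" "V \<subseteq> set ps" "wedges ps = F" "length ps = 2 * card F + 1"
    using walk_exists[OF sg con] by blast
  define m where "m = card F"
  have fV: "finite V" using sg box_finite unfolding subgraph_box_def by (metis finite_subset)
  have "card V \<le> card (set ps)" using ps(3) by (intro card_mono) auto
  also have "\<dots> \<le> length ps" by (rule card_length)
  finally have "real (card V) \<le> 2 * real m + 1" using ps(5) unfolding m_def by simp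
  then have l: "ln (real n) \<le> 2 * real m + 1" using lnV by simp
  have "card F \<le> card (Pow (box x n))"
    using sub_F_finite[OF sg] box_finite by (intro card_mono) auto
  also have "\<dots> = 2 ^ card (box x n)" using box_finite by (simp add: card_Pow)
  also have "\<dots> \<le> 2 ^ (n * n)" using box_card by (intro power_increasing) auto
  finally have mM: "m \<in> Mset n" using l unfolding Mset_def m_def by simp
  have ne: "ps \<noteq> []" using ps(5) by auto
  have "hd ps \<in> box x n" proof -
    have "hd ps \<in> set ps" using ne by simp
    then show ?thesis using ps(2) sg unfolding subgraph_box_def by blast
  qed
  then have "ps \<in> walks x n (length ps - 1)" using walk_in_walks ps(1) ne by blast
  then have "ps \<in> {ps \<in> walks x n (2*m). card (wedges ps) = m}" using ps(4,5) unfolding m_def by simp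
  then have "w \<notin> BadW ps" using w(2) mM unfolding Bad_def by blast
  then have nl: "w \<notin> LowSet (dual_cross ` wedges ps)" and nh: "w \<notin> HighSet (dual_cross ` wedges ps)"
    unfolding BadW_def by auto
  have fS: "finite (dual_cross ` wedges ps)" using wedges_finite by auto
  have aw: "abs_weight w F = (\<Sum>c\<in>dual_cross ` wedges ps. \<bar>w c\<bar>)"
    using abs_weight_dc(1)[OF ps(1)] ps(4) by simp
  have cw: "card (dual_cross ` wedges ps) = card F" using abs_weight_dc(2)[OF ps(1)] ps(4) by simp
  have "\<not> (\<Sum>c\<in>dual_cross ` wedges ps. \<bar>w c\<bar>) < dd / 2 * card (dual_cross ` wedges ps)"
    using LowSet_mem[OF w(1) fS] nl by blast
  moreover have "\<not> (\<Sum>c\<in>dual_cross ` wedges ps. \<bar>w c\<bar>) > 39 * card (dual_cross ` wedges ps)"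
    using HighSet_mem[OF w(1) fS] nh by blast
  ultimately show ?thesis unfolding aw cw by simp
qed

lemma Bad_summable: "summable (\<lambda>n. measure mu (Bad x n))"
proof (rule summable_comparison_test')
  show "summable (\<lambda>n. 4 * exp 5 * inverse (real n ^ 2))"
    using inverse_power_summable[of 2, where 'a=real, OF order_refl] by (rule summable_mult)
  fix n :: nat assume n: "n \<ge> 1"
  have "norm (measure mu (Bad x n)) = measure mu (Bad x n)" by simp
  also have "\<dots> \<le> 4 * exp 5 / real n ^ 3" using Bad_measure[OF n] .
  also have "\<dots> \<le> 4 * exp 5 * inverse (real n ^ 2)"
  proof -
    have "real n ^ 2 \<le> real n ^ 3" using n by (intro power_increasing) auto
    then have "1 / real n ^ 3 \<le> 1 / real n ^ 2" using n by (intro divide_left_mono) auto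
    then have "4 * exp 5 * (1 / real n ^ 3) \<le> 4 * exp 5 * (1 / real n ^ 2)"
      by (intro mult_left_mono) auto
    then show ?thesis by (simp add: inverse_eq_divide)
  qed
  finally show "norm (measure mu (Bad x n)) \<le> 4 * exp 5 * inverse (real n ^ 2)" .
qed


theorem lemma2p3:
  shows "\<exists>l1 l2 :: real. l1 > 0 \<and> l2 > 0 \<and>
    (AE w in mu. \<forall>x :: vtx. \<exists>N :: nat. \<forall>n > N. \<forall>V F.
       subgraph_box x n V F \<and> connected_graph V F \<and> real (card V) \<ge> ln (real n) \<longrightarrow>
         l1 * real (card F) \<ge> abs_weight w F \<and> abs_weight w F \<ge> l2 * real (card F))"
proof (intro exI conjI)
  show "(39::real) > 0" by simp
  show "dd / 2 > 0" by (simp add: dd_def)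
  interpret mp: prob_space mu by (rule prob_mu)
  show "AE w in mu. \<forall>x :: vtx. \<exists>N :: nat. \<forall>n > N. \<forall>V F.
       subgraph_box x n V F \<and> connected_graph V F \<and> real (card V) \<ge> ln (real n) \<longrightarrow>
         39 * real (card F) \<ge> abs_weight w F \<and> abs_weight w F \<ge> dd / 2 * real (card F)"
  proof (subst AE_all_countable, intro allI)
    fix x :: vtx
    have "AE w in mu. eventually (\<lambda>n. w \<in> space mu - Bad x n) sequentially"
      by (rule borel_cantelli_AE1[OF Bad_sets _ Bad_summable]) (simp add: mp.emeasure_eq_measure)
    then show "AE w in mu. \<exists>N :: nat. \<forall>n > N. \<forall>V F.
       subgraph_box x n V F \<and> connected_graph V F \<and> real (card V) \<ge> ln (real n) \<longrightarrow>
         39 * real (card F) \<ge> abs_weight w F \<and> abs_weight w F \<ge> dd / 2 * real (card F)"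
    proof (rule AE_mp, intro AE_I2 impI)
      fix w assume "eventually (\<lambda>n. w \<in> space mu - Bad x n) sequentially"
      then obtain N where N: "\<And>n. n \<ge> N \<Longrightarrow> w \<in> space mu - Bad x n"
        unfolding eventually_sequentially by blast
      show "\<exists>N :: nat. \<forall>n > N. \<forall>V F.
       subgraph_box x n V F \<and> connected_graph V F \<and> real (card V) \<ge> ln (real n) \<longrightarrow>
         39 * real (card F) \<ge> abs_weight w F \<and> abs_weight w F \<ge> dd / 2 * real (card F)"
      proof (intro exI[of _ N] allI impI)
        fix n V F assume n: "n > N" and h: "subgraph_box x n V F \<and> connected_graph V F \<and> real (card V) \<ge> ln (real n)"
        have "w \<in> space mu" "w \<notin> Bad x n" using N[of n] n by auto
        then show "39 * real (card F) \<ge> abs_weight w F \<and> abs_weight w F \<ge> dd / 2 * real (card F)"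
          using det[of w x n V F] h by blast
      qed
    qed
  qed
qed


end
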